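(* Let $T$ be a bounded linear operator on a complex separable infinite-dimensional Hilbert space $\mathcal{H}$ admitting a $\mathbb{T}$-eigenvector field $E$ which is $\alpha$-H\"olderian for some $\alpha\in(0,1]$, and let $R$ be the operator defined from $E$ in the context. There exists a positive constant $C(E,\alpha)$ depending only on $E$ and $\alpha$ such that for all $x,y\in\mathcal{H}$, $$|\langle RT^{*n}x,y\rangle|\le\frac{C(E,\alpha)\,\|x\|\,\|y\|}{n^{\alpha}}$$ for every positive integer $n$.
   Context: The inner product is linear in the second variable, conjugate-linear in the first. $\mathbb{T}$ is the unit circle, $\mu$ normalized Lebesgue measure. A $\mathbb{T}$-eigenvector field is a bounded map $E:\mathbb{T}\to\mathcal{H}$ with $TE(\lambda)=\lambda E(\lambda)$ for all $\lambda$; it is $\alpha$-H\"olderian if there is $C(E)>0$ with $\|E(e^{i\theta})-E(e^{i\theta'})\|\le C(E)|\theta-\theta'|^{\alpha}$ for all $\theta,\theta'\in[0,2\pi)$. $K:L^2(\mathbb{T},\mu)\to\mathcal{H}$, $Kf=\int f(\lambda)E(\lambda)\,d\mu(\lambda)$, and $R=KK^*$; equivalently $\langle RT^{*n}x,y\rangle=\int_{\mathbb{T}}\lambda^n\langle x,E(\lambda)\rangle\overline{\langle y,E(\lambda)\rangle}\,d\mu(\lambda)$. *)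

theory Defs
  imports "HOL-Analysis.Analysis"
begin

text \<open>The inner product is conjugate-linear
  in the first and linear in the second variable.\<close>

class complex_vector = real_vector +
  fixes scaleC :: "complex \<Rightarrow> 'a \<Rightarrow> 'a" (infixr \<open>*\<^sub>C\<close> 75)
  assumes scaleC_add_right: "a *\<^sub>C (x + y) = a *\<^sub>C x + a *\<^sub>C y"
    and scaleC_add_left: "(a + b) *\<^sub>C x = a *\<^sub>C x + b *\<^sub>C x"
    and scaleC_scaleC: "a *\<^sub>C (b *\<^sub>C x) = (a * b) *\<^sub>C x"
    and scaleC_one: "1 *\<^sub>C x = x"
    and scaleR_scaleC: "r *\<^sub>R x = (complex_of_real r) *\<^sub>C x"

class complex_inner = complex_vector + real_normed_vector +
  fixes cinner :: "'a \<Rightarrow> 'a \<Rightarrow> complex"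
  assumes cinner_commute: "cinner x y = cnj (cinner y x)"
    and cinner_add_right: "cinner x (y + z) = cinner x y + cinner x z"
    and cinner_scaleC_right: "cinner x (a *\<^sub>C y) = a * cinner x y"
    and cinner_ge_zero: "0 \<le> Re (cinner x x)"
    and cinner_eq_zero_iff: "cinner x x = 0 \<longleftrightarrow> x = 0"
    and norm_eq_sqrt_cinner: "norm x = sqrt (Re (cinner x x))"

class chilbert_space = complex_inner + complete_space

definition cspan :: "'a::complex_vector set \<Rightarrow> 'a set" where
  "cspan S = {y. \<exists>c. y = (\<Sum>s\<in>S. c s *\<^sub>C s)}"

definition infinite_dimensional :: "'a::complex_vector itself \<Rightarrow> bool" where
  "infinite_dimensional _ \<longleftrightarrow> (\<forall>S::'a set. finite S \<longrightarrow> (\<exists>x. x \<notin> cspan S))"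

definition bounded_clinear_op :: "('a::complex_inner \<Rightarrow> 'a) \<Rightarrow> bool" where
  "bounded_clinear_op T \<longleftrightarrow>
     (\<forall>x y. T (x + y) = T x + T y) \<and> (\<forall>a x. T (a *\<^sub>C x) = a *\<^sub>C T x) \<and>
     (\<exists>K. \<forall>x. norm (T x) \<le> K * norm x)"

definition cadjoint :: "('a::complex_inner \<Rightarrow> 'a) \<Rightarrow> ('a \<Rightarrow> 'a)" where
  "cadjoint T = (THE S. \<forall>x y. cinner (S x) y = cinner x (T y))"

definition circle_measure :: "complex measure" where
  "circle_measure = distr (uniform_measure lborel {0..2*pi})
                          (restrict_space borel (sphere 0 1)) cis"

definition T_eigenvector_field :: "('a::complex_inner \<Rightarrow> 'a) \<Rightarrow> (complex \<Rightarrow> 'a) \<Rightarrow> bool" where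
  "T_eigenvector_field T E \<longleftrightarrow>
     (\<exists>B. \<forall>z\<in>sphere 0 1. norm (E z) \<le> B) \<and>
     (\<forall>z\<in>sphere 0 1. T (E z) = z *\<^sub>C E z)"

definition holderian :: "real \<Rightarrow> (complex \<Rightarrow> 'a::real_normed_vector) \<Rightarrow> bool" where
  "holderian \<alpha> E \<longleftrightarrow> (\<exists>C>0. \<forall>\<theta>\<in>{0..<2*pi}. \<forall>\<theta>'\<in>{0..<2*pi}.
      norm (E (cis \<theta>) - E (cis \<theta>')) \<le> C * \<bar>\<theta> - \<theta>'\<bar> powr \<alpha>)"

text \<open>\<open>R = K K^*\<close>, where \<open>K f = \<integral> f(\<lambda>) E(\<lambda>) d\<mu>\<close>; since \<open>(K^* y)(\<lambda>) = \<langle>E(\<lambda>), y\<rangle>\<close>,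
  \<open>R y = \<integral> \<langle>E(\<lambda>), y\<rangle> E(\<lambda>) d\<mu>(\<lambda>)\<close> (Bochner integral).\<close>
definition R_op :: "(complex \<Rightarrow> 'a::{chilbert_space, second_countable_topology}) \<Rightarrow> 'a \<Rightarrow> 'a" where
  "R_op E y = integral\<^sup>L circle_measure (\<lambda>z. cinner (E z) y *\<^sub>C E z)"

end

theory Submission
  imports Defs "HOL-Analysis.Analysis"
begin
lemma cinner_zero_right[simp]: "cinner x (0::'a::complex_inner) = 0"
  using cinner_add_right[of x "0::'a" 0] by simp
lemma cinner_zero_left[simp]: "cinner (0::'a::complex_inner) x = 0"
  by (subst cinner_commute) simp
lemma cinner_add_left: "cinner (x + y) (z::'a::complex_inner) = cinner x z + cinner y z"
  by (subst (1 2 3) cinner_commute) (simp add: cinner_add_right)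
lemma cinner_scaleC_left: "cinner (a *\<^sub>C x) (y::'a::complex_inner) = cnj a * cinner x y"
  by (subst (1 2) cinner_commute) (simp add: cinner_scaleC_right)
lemma cinner_scaleR_right: "cinner x (r *\<^sub>R (y::'a::complex_inner)) = of_real r * cinner x y"
  by (simp add: scaleR_scaleC cinner_scaleC_right)
lemma cinner_scaleR_left: "cinner (r *\<^sub>R x) (y::'a::complex_inner) = of_real r * cinner x y"
  by (simp add: scaleR_scaleC cinner_scaleC_left)
lemma cinner_minus_right: "cinner x (- (y::'a::complex_inner)) = - cinner x y"
  using cinner_scaleR_right[of x "-1" y] by simp
lemma cinner_minus_left: "cinner (- x) (y::'a::complex_inner) = - cinner x y"
  using cinner_scaleR_left[of "-1" x y] by simp
lemma cinner_diff_right: "cinner x (y - (z::'a::complex_inner)) = cinner x y - cinner x z"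
  using cinner_add_right[of x y "-z"] by (simp add: cinner_minus_right)
lemma cinner_diff_left: "cinner (x - y) (z::'a::complex_inner) = cinner x z - cinner y z"
  using cinner_add_left[of x "-y" z] by (simp add: cinner_minus_left)
lemma scaleC_zero_right[simp]: "a *\<^sub>C (0::'a::complex_vector) = 0"
  using scaleC_add_right[of a "0::'a" 0] by simp
lemma scaleC_zero_left[simp]: "0 *\<^sub>C (x::'a::complex_vector) = 0"
  using scaleC_add_left[of 0 0 x] by simp
lemma scaleC_minus1: "(-1) *\<^sub>C (x::'a::complex_vector) = - x"
  using scaleR_scaleC[of "-1" x] by simp
lemma scaleC_minus_right: "a *\<^sub>C (- x::'a::complex_vector) = - (a *\<^sub>C x)"
  by (metis scaleC_minus1 scaleC_scaleC mult.commute)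
lemma scaleC_diff_right: "a *\<^sub>C (x - y::'a::complex_vector) = a *\<^sub>C x - a *\<^sub>C y"
  using scaleC_add_right[of a x "-y"] by (simp add: scaleC_minus_right)
lemma scaleC_diff_left: "(a - b) *\<^sub>C (x::'a::complex_vector) = a *\<^sub>C x - b *\<^sub>C x"
proof -
  have "(-b) *\<^sub>C x = (-1) *\<^sub>C (b *\<^sub>C x)" by (simp add: scaleC_scaleC)
  hence "(-b) *\<^sub>C x = - (b *\<^sub>C x)" by (simp add: scaleC_minus1)
  thus ?thesis using scaleC_add_left[of a "-b" x] by simp
qed

lemma cinner_self: "cinner x (x::'a::complex_inner) = of_real ((norm x)\<^sup>2)"
proof -
  have c: "cinner x x = cnj (cinner x x)" by (rule cinner_commute)
  have "Im (cinner x x) = - Im (cinner x x)" using arg_cong[OF c, of Im] by simp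
  hence "Im (cinner x x) = 0" by simp
  moreover have "Re (cinner x x) = (norm x)\<^sup>2" using norm_eq_sqrt_cinner[of x] cinner_ge_zero[of x] by simp
  ultimately show ?thesis by (simp add: complex_eq_iff)
qed

lemma norm_scaleC: "norm (a *\<^sub>C (x::'a::complex_inner)) = cmod a * norm x"
proof -
  have "of_real ((norm (a *\<^sub>C x))\<^sup>2) = cinner (a *\<^sub>C x) (a *\<^sub>C x)" by (rule cinner_self[symmetric])
  also have "\<dots> = (cnj a * a) * cinner x x" by (simp add: cinner_scaleC_left cinner_scaleC_right)
  also have "cnj a * a = of_real ((cmod a)\<^sup>2)" by (metis complex_norm_square mult.commute of_real_power)
  also have "of_real ((cmod a)\<^sup>2) * cinner x x = (of_real ((cmod a * norm x)\<^sup>2) :: complex)"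
    by (simp add: cinner_self power_mult_distrib)
  finally have "(norm (a *\<^sub>C x))\<^sup>2 = (cmod a * norm x)\<^sup>2" using of_real_eq_iff by blast
  thus ?thesis by (simp add: power2_eq_iff_nonneg)
qed

lemma norm_sq_add: "(norm (x + y::'a::complex_inner))\<^sup>2 = (norm x)\<^sup>2 + (norm y)\<^sup>2 + 2 * Re (cinner x y)"
proof -
  have "of_real ((norm (x+y))\<^sup>2) = cinner (x+y) (x+y)" by (rule cinner_self[symmetric])
  also have "\<dots> = cinner x x + cinner y y + (cinner x y + cinner y x)"
    by (simp add: cinner_add_left cinner_add_right)
  also have "cinner x y + cinner y x = of_real (2 * Re (cinner x y))"
    by (subst (2) cinner_commute) (simp add: complex_add_cnj)
  finally have "of_real ((norm (x+y))\<^sup>2) = (of_real ((norm x)\<^sup>2 + (norm y)\<^sup>2 + 2 * Re (cinner x y)) :: complex)"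
    by (simp add: cinner_self)
  thus ?thesis using of_real_eq_iff by blast
qed

lemma norm_sq_diff: "(norm (x - y::'a::complex_inner))\<^sup>2 = (norm x)\<^sup>2 + (norm y)\<^sup>2 - 2 * Re (cinner x y)"
  using norm_sq_add[of x "-y"] by (simp add: cinner_minus_right)

lemma cauchy_schwarz: "cmod (cinner x (y::'a::complex_inner)) \<le> norm x * norm y"
proof (cases "x = 0")
  case True then show ?thesis by simp
next
  case False
  hence nx: "norm x > 0" by simp
  define a where "a = cinner x y / of_real ((norm x)\<^sup>2)"
  define z where "z = y - a *\<^sub>C x"
  have xz: "cinner x z = 0" using nx
    by (simp add: z_def cinner_diff_right cinner_scaleC_right a_def cinner_self)
  have zx: "cinner (a *\<^sub>C x) z = 0" by (simp add: cinner_scaleC_left xz)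
  have "y = a *\<^sub>C x + z" by (simp add: z_def)
  hence "(norm y)\<^sup>2 = (cmod a * norm x)\<^sup>2 + (norm z)\<^sup>2"
    using norm_sq_add[of "a *\<^sub>C x" z] zx by (simp add: norm_scaleC)
  hence "(cmod a * norm x)\<^sup>2 \<le> (norm y)\<^sup>2" by simp
  hence ca: "cmod a * norm x \<le> norm y" by (rule power2_le_imp_le) simp
  have n2: "cmod (complex_of_real ((norm x)\<^sup>2)) = (norm x)\<^sup>2" by (simp only: norm_of_real) simp
  have "cmod a = cmod (cinner x y) / (norm x)\<^sup>2" unfolding a_def norm_divide n2 ..
  hence "cmod a * norm x = cmod (cinner x y) / norm x" using nx
    by (simp add: power2_eq_square)
  hence "cmod (cinner x y) / norm x \<le> norm y" using ca by simp
  hence "cmod (cinner x y) \<le> norm y * norm x" using nx by (simp add: pos_divide_le_eq)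
  thus ?thesis by (simp add: ac_simps)
qed

lemma bounded_linear_cinner_left: "bounded_linear (\<lambda>v::'a::complex_inner. cinner v y)"
  apply (rule bounded_linear_intro[where K="norm y"])
  apply (simp add: cinner_add_left) apply (simp add: cinner_scaleR_left scaleR_conv_of_real)
  using cauchy_schwarz by blast

lemma bounded_linear_cinner_right: "bounded_linear (\<lambda>v::'a::complex_inner. cinner y v)"
  apply (rule bounded_linear_intro[where K="norm y"])
  apply (simp add: cinner_add_right) apply (simp add: cinner_scaleR_right scaleR_conv_of_real)
  using cauchy_schwarz by (metis mult.commute)




lemma riesz:
  fixes \<phi> :: "'a::chilbert_space \<Rightarrow> complex"
  assumes add: "\<And>x y. \<phi> (x + y) = \<phi> x + \<phi> y"
    and sc: "\<And>a x. \<phi> (a *\<^sub>C x) = a * \<phi> x"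
    and bd: "\<And>x. cmod (\<phi> x) \<le> K * norm x"
  shows "\<exists>u. \<forall>y. \<phi> y = cinner u y"
proof -
  have lin: "bounded_linear \<phi>"
    apply (rule bounded_linear_intro[where K=K])
      apply (rule add) apply (simp add: scaleR_scaleC sc scaleR_conv_of_real) using bd by (simp add: mult.commute)
  have phi0: "\<phi> 0 = 0" using add[of 0 0] by simp
  define A where "A = (\<lambda>x. cmod (\<phi> x)) ` {x. norm x \<le> 1}"
  define M where "M = Sup A"
  have bdd: "bdd_above A" unfolding A_def
  proof (rule bdd_aboveI2[where M="\<bar>K\<bar>"])
    fix x assume "x \<in> {x::'a. norm x \<le> 1}"
    hence "norm x \<le> 1" by simp
    have "cmod (\<phi> x) \<le> K * norm x" by (rule bd)
    also have "\<dots> \<le> \<bar>K\<bar> * norm x" by (simp add: mult_right_mono)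
    also have "\<dots> \<le> \<bar>K\<bar> * 1" using \<open>norm x \<le> 1\<close> by (intro mult_left_mono) auto
    finally show "cmod (\<phi> x) \<le> \<bar>K\<bar>" by simp
  qed
  have Ane: "A \<noteq> {}" unfolding A_def by (auto intro!: exI[of _ "0::'a"])
  have Mup: "cmod (\<phi> x) \<le> M" if "norm x \<le> 1" for x
    unfolding M_def using that bdd by (intro cSup_upper) (auto simp: A_def)
  have M0: "0 \<le> M" using Mup[of 0] by (simp add: phi0)
  have Mb: "cmod (\<phi> x) \<le> M * norm x" for x
  proof (cases "x = 0")
    case True then show ?thesis by (simp add: phi0)
  next
    case False
    hence nx: "norm x > 0" by simp
    have "\<phi> ((1 / norm x) *\<^sub>R x) = of_real (1 / norm x) * \<phi> x"
      by (simp add: scaleR_scaleC sc)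
    moreover have "norm ((1 / norm x) *\<^sub>R x) \<le> 1" using nx by simp
    ultimately have "cmod (of_real (1 / norm x) * \<phi> x) \<le> M" using Mup by metis
    hence "cmod (\<phi> x) / norm x \<le> M" using nx by (simp add: norm_mult norm_inverse divide_inverse ac_simps)
    thus ?thesis using nx by (simp add: pos_divide_le_eq)
  qed
  show ?thesis
  proof (cases "M = 0")
    case True
    hence "\<phi> y = 0" for y using Mb[of y] by simp
    thus ?thesis by (intro exI[of _ 0]) simp
  next
    case False
    hence Mpos: "M > 0" using M0 by simp
    have approx: "\<exists>y. norm y \<le> 1 \<and> Im (\<phi> y) = 0 \<and> M - e < Re (\<phi> y)" if e: "e > 0" for e
    proof -
      have "M - e < Sup A" using e M_def by simp
      then obtain x where x: "norm x \<le> 1" "M - e < cmod (\<phi> x)"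
        using less_cSup_iff[OF Ane bdd] unfolding A_def by auto
      show ?thesis
      proof (cases "\<phi> x = 0")
        case True
        then show ?thesis using x by (intro exI[of _ x]) simp
      next
        case False
        define c where "c = \<phi> x"
        have cc: "cmod c > 0" using False c_def by simp
        define y where "y = (cnj c / of_real (cmod c)) *\<^sub>C x"
        have ny: "norm y = norm x" unfolding y_def norm_scaleC using cc
          by (simp add: norm_divide)
        have "\<phi> y = cnj c * c / of_real (cmod c)" unfolding y_def sc c_def by simp
        also have "cnj c * c = of_real ((cmod c)\<^sup>2)"
          by (metis complex_norm_square mult.commute of_real_power)
        also have "of_real ((cmod c)\<^sup>2) / of_real (cmod c) = (of_real (cmod c) :: complex)"
          using cc by (simp add: power2_eq_square)
        finally have "\<phi> y = of_real (cmod c)" .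
        then show ?thesis using x ny c_def by (intro exI[of _ y]) simp
      qed
    qed
    define ee where "ee = (\<lambda>k::nat. inverse (real (Suc k)))"
    have ee_pos: "ee k > 0" for k by (simp add: ee_def)
    have "\<forall>k. \<exists>y. norm y \<le> 1 \<and> Im (\<phi> y) = 0 \<and> M - ee k < Re (\<phi> y)"
      using approx ee_pos by blast
    then obtain Y where Y: "\<forall>k. norm (Y k) \<le> 1 \<and> Im (\<phi> (Y k)) = 0 \<and> M - ee k < Re (\<phi> (Y k))"
      using choice[of "\<lambda>k y. norm y \<le> 1 \<and> Im (\<phi> y) = 0 \<and> M - ee k < Re (\<phi> y)"] by blast
    define r where "r = (\<lambda>k. Re (\<phi> (Y k)))"
    have Yn: "norm (Y k) \<le> 1" for k using Y by blast
    have phiY: "\<phi> (Y k) = of_real (r k)" for k using Y by (simp add: r_def complex_eq_iff)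
    have rlow: "M - ee k < r k" for k using Y r_def by blast
    have rup: "r k \<le> M" for k using Mup[OF Yn[of k]] phiY[of k] by simp
    have key: "(norm (Y j - Y k))\<^sup>2 \<le> 4 * ((ee j + ee k) / M)" for j k
    proof -
      define S where "S = Y j + Y k"
      define d where "d = (ee j + ee k) / M"
      have d0: "d \<ge> 0" using ee_pos Mpos by (simp add: d_def less_imp_le)
      have par: "(norm (Y j - Y k))\<^sup>2 = 2 * (norm (Y j))\<^sup>2 + 2 * (norm (Y k))\<^sup>2 - (norm S)\<^sup>2"
        unfolding S_def using norm_sq_add[of "Y j" "Y k"] norm_sq_diff[of "Y j" "Y k"] by simp
      have "(norm (Y j))\<^sup>2 \<le> 1" "(norm (Y k))\<^sup>2 \<le> 1"
        using Yn[of j] Yn[of k] by (simp_all add: power_le_one)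
      hence p4: "(norm (Y j - Y k))\<^sup>2 \<le> 4 - (norm S)\<^sup>2" using par by simp
      have pS: "\<phi> S = of_real (r j + r k)" unfolding S_def add phiY by simp
      have "cmod (\<phi> S) = \<bar>r j + r k\<bar>" unfolding pS by (rule norm_of_real)
      hence "r j + r k \<le> M * norm S" using Mb[of S] abs_ge_self[of "r j + r k"] by linarith
      moreover have "r j + r k > 2 * M - M * d"
        using rlow[of j] rlow[of k] Mpos by (simp add: d_def)
      ultimately have "M * (2 - d) < M * norm S" by (simp add: algebra_simps)
      hence Sd: "2 - d < norm S" using Mpos by simp
      show ?thesis
      proof (cases "2 - d \<le> 0")
        case True
        thus ?thesis using p4 zero_le_power2[of "norm S"] unfolding d_def[symmetric] by linarith
      next
        case False
        hence "(2 - d)\<^sup>2 \<le> (norm S)\<^sup>2" using Sd by (intro power_mono) auto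
        hence "(norm (Y j - Y k))\<^sup>2 \<le> 4 - (2 - d)\<^sup>2" using p4 by simp
        also have "4 - (2 - d)\<^sup>2 = 4 * d - d\<^sup>2" by (simp add: power2_eq_square algebra_simps)
        also have "\<dots> \<le> 4 * d" by simp
        finally show ?thesis unfolding d_def .
      qed
    qed
    have "Cauchy Y"
    proof (rule CauchyI)
      fix e :: real assume e: "e > 0"
      obtain N :: nat where N: "8 / (M * e\<^sup>2) < real N" using reals_Archimedean2 by blast
      have "norm (Y m - Y n) < e" if "m \<ge> N" "n \<ge> N" for m n
      proof -
        have eeN: "ee p \<le> inverse (real (Suc N))" if "p \<ge> N" for p
          unfolding ee_def using that by (intro le_imp_inverse_le) auto
        have "(norm (Y m - Y n))\<^sup>2 \<le> 4 * ((ee m + ee n) / M)" by (rule key)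
        also have "\<dots> \<le> 4 * ((2 * inverse (real (Suc N))) / M)"
          using eeN[OF \<open>m \<ge> N\<close>] eeN[OF \<open>n \<ge> N\<close>] Mpos
          by (intro mult_left_mono divide_right_mono) auto
        also have "\<dots> = 8 / (M * real (Suc N))" by (simp add: field_simps)
        also have "\<dots> < e\<^sup>2"
        proof -
          have "8 / (M * e\<^sup>2) < real (Suc N)" using N by simp
          hence "8 < real (Suc N) * (M * e\<^sup>2)" using Mpos e by (simp add: divide_less_eq)
          thus ?thesis using Mpos by (simp add: divide_less_eq ac_simps)
        qed
        finally have "(norm (Y m - Y n))\<^sup>2 < e\<^sup>2" .
        thus ?thesis using e by (simp add: power_less_imp_less_base)
      qed
      thus "\<exists>M. \<forall>m\<ge>M. \<forall>n\<ge>M. norm (Y m - Y n) < e" by blast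
    qed
    then obtain L where L: "Y \<longlonglongrightarrow> L" using Cauchy_convergent_iff convergent_def by blast
    have t1: "(\<lambda>k. \<phi> (Y k)) \<longlonglongrightarrow> \<phi> L" using bounded_linear.tendsto[OF lin L] .
    have "r \<longlonglongrightarrow> M"
    proof (rule tendsto_sandwich[where f="\<lambda>k. M + - ee k" and h="\<lambda>k. M"])
      show "\<forall>\<^sub>F n in sequentially. M + - ee n \<le> r n" using rlow by (simp add: less_imp_le)
      show "\<forall>\<^sub>F n in sequentially. r n \<le> M" using rup by simp
      show "(\<lambda>k. M + - ee k) \<longlonglongrightarrow> M" unfolding ee_def by (rule LIMSEQ_inverse_real_of_nat_add_minus)
    qed simp
    hence "(\<lambda>k. complex_of_real (r k)) \<longlonglongrightarrow> of_real M" by (rule tendsto_of_real)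
    hence "(\<lambda>k. \<phi> (Y k)) \<longlonglongrightarrow> of_real M" using phiY by simp
    hence phiL: "\<phi> L = of_real M" using t1 LIMSEQ_unique by blast
    have "norm L \<le> 1" using tendsto_norm[OF L] Yn by (intro LIMSEQ_le_const2) auto
    moreover have "M \<le> M * norm L" using Mb[of L] phiL Mpos by simp
    hence "1 \<le> norm L" using Mpos by simp
    ultimately have nL: "norm L = 1" by simp
    have LL: "cinner L L = 1" using cinner_self[of L] nL by simp
    have orth: "\<phi> h = 0" if hL: "cinner L h = 0" for h
    proof (rule ccontr)
      assume cne: "\<phi> h \<noteq> 0"
      define c where "c = \<phi> h"
      define a where "a = (cmod c)\<^sup>2"
      define b where "b = (norm h)\<^sup>2"
      have apos: "a > 0" using cne by (simp add: a_def c_def)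
      have b0: "b \<ge> 0" by (simp add: b_def)
      define t where "t = 1 / (M * (b + 1))"
      have tpos: "t > 0" using Mpos b0 by (simp add: t_def)
      define v where "v = L + (of_real t * cnj c) *\<^sub>C h"
      have cc: "cnj c * c = of_real a"
        unfolding a_def by (metis complex_norm_square mult.commute of_real_power)
      have "\<phi> v = of_real M + of_real t * (cnj c * c)"
        unfolding v_def add sc phiL c_def by simp
      hence phiv: "\<phi> v = of_real (M + t * a)" using cc by simp
      have "(norm v)\<^sup>2 = 1 + (cmod (of_real t * cnj c) * norm h)\<^sup>2"
        unfolding v_def norm_sq_add norm_scaleC nL
        by (simp add: cinner_scaleC_right hL)
      also have "(cmod (of_real t * cnj c) * norm h)\<^sup>2 = t\<^sup>2 * a * b"
        using tpos by (simp add: norm_mult a_def b_def power_mult_distrib)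
      finally have nv: "(norm v)\<^sup>2 = 1 + t\<^sup>2 * a * b" .
      have "cmod (\<phi> v) = \<bar>M + t * a\<bar>" unfolding phiv by (rule norm_of_real)
      hence "M + t * a \<le> M * norm v" using Mb[of v] abs_ge_self[of "M + t * a"] by linarith
      hence "(M + t * a)\<^sup>2 \<le> (M * norm v)\<^sup>2"
        using tpos apos Mpos by (intro power_mono) auto
      hence "(M + t * a)\<^sup>2 \<le> M\<^sup>2 * (1 + t\<^sup>2 * a * b)" by (simp add: power_mult_distrib nv)
      hence "(t * a) * (2 * M + t * a) \<le> (t * a) * (M\<^sup>2 * t * b)"
        by (simp add: power2_eq_square algebra_simps)
      hence i1: "2 * M + t * a \<le> M\<^sup>2 * t * b" using tpos apos by simp
      have Mt: "M * t = 1 / (b + 1)" using Mpos unfolding t_def by simp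
      have "M\<^sup>2 * t * b = M * (M * t) * b" by (simp add: power2_eq_square)
      also have "\<dots> = M * (b / (b + 1))" unfolding Mt by simp
      finally have "M\<^sup>2 * t * b = M * (b / (b + 1))" .
      also have "\<dots> \<le> M * 1" using Mpos b0 by (intro mult_left_mono) auto
      finally show False using i1 mult_pos_pos[OF tpos apos] Mpos by linarith
    qed
    show ?thesis
    proof (intro exI[of _ "of_real M *\<^sub>C L"] allI)
      fix y
      define h where "h = y - cinner L y *\<^sub>C L"
      have "cinner L h = 0" unfolding h_def by (simp add: cinner_diff_right cinner_scaleC_right LL)
      hence "\<phi> h = 0" by (rule orth)
      have "y = cinner L y *\<^sub>C L + h" unfolding h_def by simp
      hence "\<phi> y = \<phi> (cinner L y *\<^sub>C L + h)" by (rule arg_cong)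
      also have "\<dots> = \<phi> (cinner L y *\<^sub>C L) + \<phi> h" by (rule add)
      also have "\<dots> = cinner L y * of_real M" by (simp add: sc phiL \<open>\<phi> h = 0\<close>)
      finally have "\<phi> y = cinner L y * of_real M" .
      thus "\<phi> y = cinner (of_real M *\<^sub>C L) y" by (simp add: cinner_scaleC_left)
    qed
  qed
qed




lemma bounded_set_integrable:
  fixes F :: "real \<Rightarrow> complex"
  assumes "F \<in> borel_measurable lborel" "\<And>t. cmod (F t) \<le> K"
  shows "set_integrable lborel {a..b} F"
  unfolding set_integrable_def
  by (rule integrableI_bounded_set_indicator[where B=K]) (use assms emeasure_compact_finite[of "{a..b}"] in auto)

lemma bounded_integrable_on:
  fixes F :: "real \<Rightarrow> complex"
  assumes "F \<in> borel_measurable lborel" "\<And>t. cmod (F t) \<le> K"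
  shows "F integrable_on {a..b}"
  by (rule set_borel_integral_eq_integral(1)[OF bounded_set_integrable[OF assms]])

lemma shift_bound:
  fixes F :: "real \<Rightarrow> complex"
  assumes Fint: "\<And>a b. F integrable_on {a..b}"
    and Fsint: "\<And>a b. (\<lambda>t. F (t + h)) integrable_on {a..b}"
    and Fb: "\<And>t. cmod (F t) \<le> K"
    and hpos: "0 < h" "h \<le> pi"
    and G: "\<And>t. 0 \<le> t \<Longrightarrow> t + h < 2*pi \<Longrightarrow> cmod (F t + F (t + h)) \<le> D"
    and D0: "0 \<le> D"
  shows "cmod (integral {0..2*pi} F) \<le> h * K + pi * D"
proof -
  define I where "I = integral {0..2*pi} F"
  have K0: "0 \<le> K" using Fb[of 0] by (meson norm_ge_zero order_trans)
  have p1: "I = integral {0..h} F + integral {h..2*pi} F"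
    unfolding I_def by (rule Henstock_Kurzweil_Integration.integral_combine[symmetric]) (use hpos pi_gt_zero Fint in auto)
  have p2: "I = integral {0..2*pi-h} F + integral {2*pi-h..2*pi} F"
    unfolding I_def by (rule Henstock_Kurzweil_Integration.integral_combine[symmetric]) (use hpos pi_gt_zero Fint in auto)
  have sh: "integral {0..2*pi-h} (\<lambda>t. F (t + h)) = integral {h..2*pi} F"
    using integral_shift_Icc_real[of 0 "2*pi-h" F h] by (simp add: o_def add.commute)
  have "integral {0..2*pi-h} (\<lambda>t. F t + F (t + h)) = integral {0..2*pi-h} F + integral {0..2*pi-h} (\<lambda>t. F (t + h))"
    by (intro integral_add Fint Fsint)
  hence eq: "2 * I = integral {0..2*pi-h} (\<lambda>t. F t + F (t + h)) + integral {2*pi-h..2*pi} F + integral {0..h} F"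
    using p1 p2 sh by simp
  have b1: "cmod (integral {0..h} F) \<le> K * measure lborel {0..h}"
    by (rule has_integral_bound_real[where S="{}"]) (use K0 Fb Fint in auto)
  have b2: "cmod (integral {2*pi-h..2*pi} F) \<le> K * measure lborel {2*pi-h..2*pi}"
    by (rule has_integral_bound_real[where S="{}"]) (use K0 Fb Fint in auto)
  have b3: "cmod (integral {0..2*pi-h} (\<lambda>t. F t + F (t + h))) \<le> D * measure lborel {0..2*pi-h}"
  proof (rule has_integral_bound_real[where S="{2*pi-h}"])
    show "((\<lambda>t. F t + F (t + h)) has_integral integral {0..2*pi-h} (\<lambda>t. F t + F (t + h))) {0..2*pi-h}"
      by (intro integrable_integral integrable_add Fint Fsint)
    fix t assume "t \<in> {0..2*pi-h} - {2*pi-h}"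
    thus "cmod (F t + F (t + h)) \<le> D" by (intro G) auto
  qed (use D0 in auto)
  have c1: "measure lborel {0..h} = h" using hpos by simp
  have c2: "measure lborel {2*pi-h..2*pi} = h" using hpos by simp
  have c3: "measure lborel {0..2*pi-h} = 2*pi - h" using hpos pi_gt_zero by simp
  have "cmod (2 * I) \<le> cmod (integral {0..2*pi-h} (\<lambda>t. F t + F (t + h))) + cmod (integral {2*pi-h..2*pi} F) + cmod (integral {0..h} F)"
    unfolding eq by (meson norm_triangle_ineq order_trans add_mono order_refl)
  also have "\<dots> \<le> D * (2*pi - h) + K * h + K * h" using b1 b2 b3 c1 c2 c3 by simp
  also have "\<dots> \<le> D * (2*pi) + 2 * (K * h)" using D0 hpos by (simp add: mult_left_mono)
  finally have "2 * cmod I \<le> 2 * (h * K + pi * D)" by (simp add: norm_mult algebra_simps)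
  thus ?thesis unfolding I_def by simp
qed




lemma cadjoint_prop:
  fixes T :: "'a::chilbert_space \<Rightarrow> 'a"
  assumes "bounded_clinear_op T"
  shows "cinner (cadjoint T x) y = cinner x (T y)"
proof -
  from assms obtain K where add: "\<And>x y. T (x+y) = T x + T y" and sc: "\<And>a x. T (a *\<^sub>C x) = a *\<^sub>C T x"
    and K: "\<And>x. norm (T x) \<le> K * norm x" unfolding bounded_clinear_op_def by blast
  have ex: "\<forall>x. \<exists>u. \<forall>y. cinner x (T y) = cinner u y"
  proof
    fix x
    show "\<exists>u. \<forall>y. cinner x (T y) = cinner u y"
    proof (rule riesz[where K="norm x * K"])
      fix y z show "cinner x (T (y + z)) = cinner x (T y) + cinner x (T z)" by (simp add: add cinner_add_right)
    next
      fix a y show "cinner x (T (a *\<^sub>C y)) = a * cinner x (T y)" by (simp add: sc cinner_scaleC_right)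
    next
      fix y
      have "cmod (cinner x (T y)) \<le> norm x * norm (T y)" by (rule cauchy_schwarz)
      also have "\<dots> \<le> norm x * (K * norm y)" by (intro mult_left_mono K) simp
      finally show "cmod (cinner x (T y)) \<le> norm x * K * norm y" by (simp add: ac_simps)
    qed
  qed
  then obtain S where S: "\<forall>x. \<forall>y. cinner x (T y) = cinner (S x) y"
    using choice[of "\<lambda>x u. \<forall>y. cinner x (T y) = cinner u y"] by blast
  define P where "P = (\<lambda>S. \<forall>x y. cinner (S x) y = cinner x (T y))"
  have PS: "P S" using S by (simp add: P_def)
  have uniq: "S' = S" if "P S'" for S'
  proof
    fix x
    define d where "d = S' x - S x"
    have "cinner d d = cinner (S' x) d - cinner (S x) d" by (simp add: d_def cinner_diff_left)
    also have "\<dots> = 0" using that PS by (simp add: P_def)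
    finally show "S' x = S x" using cinner_eq_zero_iff[of d] by (simp add: d_def)
  qed
  have "P (THE S. P S)" by (rule theI[of P S, OF PS uniq])
  thus ?thesis by (simp add: P_def cadjoint_def)
qed

lemma cadjoint_pow:
  fixes T :: "'a::chilbert_space \<Rightarrow> 'a"
  assumes "bounded_clinear_op T" "T v = z *\<^sub>C v"
  shows "cinner ((cadjoint T ^^ n) x) v = z ^ n * cinner x v"
proof (induction n)
  case 0 then show ?case by simp
next
  case (Suc n)
  have "cinner ((cadjoint T ^^ Suc n) x) v = cinner (cadjoint T ((cadjoint T ^^ n) x)) v" by simp
  also have "\<dots> = cinner ((cadjoint T ^^ n) x) (T v)" by (rule cadjoint_prop[OF assms(1)])
  also have "\<dots> = z * cinner ((cadjoint T ^^ n) x) v" by (simp add: assms(2) cinner_scaleC_right)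
  finally show ?case using Suc by simp
qed




lemma uniform_integral:
  fixes F :: "real \<Rightarrow> complex"
  assumes Fm: "F \<in> borel_measurable lborel" and Fb: "\<And>t. cmod (F t) \<le> K"
  shows "integral\<^sup>L (uniform_measure lborel {0..2*pi}) F = integral {0..2*pi} F / (2*pi)"
proof -
  define A where "A = {0..2*pi}"
  have pt: "indicator A t / emeasure lborel A = ennreal (indicator A t / (2*pi))" for t
  proof (cases "t \<in> A")
    case True
    then show ?thesis using divide_ennreal[of 1 "2*pi"] by (simp add: A_def)
  next
    case False
    then show ?thesis by simp
  qed
  have um: "uniform_measure lborel A = density lborel (\<lambda>t. ennreal (indicator A t / (2*pi)))"
    unfolding uniform_measure_def pt ..
  have As: "A \<in> sets lborel" unfolding A_def by simp
  have gm: "(\<lambda>t. indicator A t / (2*pi)) \<in> borel_measurable lborel"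
    by (intro borel_measurable_divide borel_measurable_indicator As borel_measurable_const)
  have ae: "AE t in lborel. 0 \<le> indicator A t / (2*pi)" by (rule AE_I2) (simp add: indicator_def)
  have "integral\<^sup>L (uniform_measure lborel A) F = integral\<^sup>L lborel (\<lambda>t. (indicator A t / (2*pi)) *\<^sub>R F t)"
    unfolding um by (rule integral_density[OF Fm gm ae])
  also have "\<dots> = integral\<^sup>L lborel (\<lambda>t. (1 / (2*pi)) *\<^sub>R (indicator A t *\<^sub>R F t))"
  proof -
    have "(indicator A t / (2*pi)) *\<^sub>R F t = (1 / (2*pi)) *\<^sub>R (indicator A t *\<^sub>R F t)" for t
      unfolding scaleR_scaleR by (rule arg_cong[where f="\<lambda>r. r *\<^sub>R F t"]) simp
    thus ?thesis by presburger
  qed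
  also have "\<dots> = (1 / (2*pi)) *\<^sub>R set_lebesgue_integral lborel A F"
    unfolding set_lebesgue_integral_def by (rule integral_scaleR_right)
  also have "set_lebesgue_integral lborel A F = integral A F"
    using bounded_set_integrable[OF Fm Fb, of 0 "2*pi"] unfolding A_def by (rule set_borel_integral_eq_integral(2))
  finally have fin: "integral\<^sup>L (uniform_measure lborel A) F = (1 / (2*pi)) *\<^sub>R integral A F" .
  have "(1 / (2*pi)) *\<^sub>R integral A F = integral A F / complex_of_real (2*pi)"
    by (simp add: complex_eq_iff Re_divide_of_real Im_divide_of_real)
  thus ?thesis using fin unfolding A_def by simp
qed




theorem proposition2p9:
  fixes T :: "'h::{chilbert_space, second_countable_topology} \<Rightarrow> 'h"
    and E :: "complex \<Rightarrow> 'h"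
    and \<alpha> :: real
  assumes "infinite_dimensional TYPE('h)"
    and "bounded_clinear_op T"
    and "T_eigenvector_field T E"
    and "0 < \<alpha>" and "\<alpha> \<le> 1"
    and "holderian \<alpha> E"
  shows "\<exists>C>0. \<forall>x y. \<forall>n::nat. n \<ge> 1 \<longrightarrow>
           cmod (cinner (R_op E ((cadjoint T ^^ n) x)) y) \<le> C * norm x * norm y / real n powr \<alpha>"
proof -
  from assms(3) obtain B where EB: "\<forall>z\<in>sphere 0 1. norm (E z) \<le> B"
    and eig: "\<forall>z\<in>sphere 0 1. T (E z) = z *\<^sub>C E z"
    unfolding T_eigenvector_field_def by blast
  from assms(6) obtain CE where CE: "CE > 0"
    and hol: "\<forall>\<theta>\<in>{0..<2*pi}. \<forall>\<theta>'\<in>{0..<2*pi}. norm (E (cis \<theta>) - E (cis \<theta>')) \<le> CE * \<bar>\<theta> - \<theta>'\<bar> powr \<alpha>"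
    unfolding holderian_def by blast
  have cisS: "cis t \<in> sphere 0 1" for t by simp
  have EBt: "norm (E (cis t)) \<le> B" for t using EB cisS by blast
  have B0: "0 \<le> B" using EBt[of 0] norm_ge_zero order_trans by blast
  define C where "C = B\<^sup>2 / 2 + B * CE * pi powr \<alpha> + 1"
  have Cpos: "C > 0" unfolding C_def using B0 CE by (simp add: add_nonneg_pos)
  show ?thesis
  proof (intro exI[of _ C] conjI Cpos allI impI)
    fix x y :: 'h and n :: nat
    assume n1: "n \<ge> 1"
    define w where "w = (cadjoint T ^^ n) x"
    define g where "g = (\<lambda>z. cinner (E z) w *\<^sub>C E z)"
    have npos: "real n powr \<alpha> > 0" using n1 by simp
    have RHS0: "0 \<le> C * norm x * norm y / real n powr \<alpha>" using Cpos npos by simp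
    have Rg: "R_op E w = integral\<^sup>L circle_measure g" unfolding R_op_def g_def ..
    show "cmod (cinner (R_op E ((cadjoint T ^^ n) x)) y) \<le> C * norm x * norm y / real n powr \<alpha>"
    proof (cases "integrable circle_measure g")
      case False
      hence "R_op E w = 0" unfolding Rg by (rule not_integrable_integral_eq)
      thus ?thesis using RHS0 unfolding w_def by simp
    next
      case True
      define H where "H = (\<lambda>z. cinner (g z) y)"
      have RH: "cinner (R_op E w) y = integral\<^sup>L circle_measure H"
        unfolding Rg H_def by (rule integral_bounded_linear[OF bounded_linear_cinner_left True, symmetric])
      have Hint: "integrable circle_measure H"
        unfolding H_def by (rule integrable_bounded_linear[OF bounded_linear_cinner_left True])
      have Hm0: "H \<in> borel_measurable circle_measure" using Hint by (rule borel_measurable_integrable)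
      have sc: "sets circle_measure = sets (restrict_space borel (sphere (0::complex) 1))"
        unfolding circle_measure_def by simp
      have Hm: "H \<in> borel_measurable (restrict_space borel (sphere 0 1))"
        using Hm0 unfolding measurable_cong_sets[OF sc refl] .
      have cisb: "cis \<in> borel_measurable borel"
        by (intro borel_measurable_continuous_onI continuous_on_cis continuous_on_id)
      have cism: "cis \<in> measurable (uniform_measure lborel {0..2*pi}) (restrict_space borel (sphere 0 1))"
      proof (rule measurable_restrict_space2)
        show "cis \<in> space (uniform_measure lborel {0..2 * pi}) \<rightarrow> sphere 0 1" using cisS by simp
        show "cis \<in> borel_measurable (uniform_measure lborel {0..2 * pi})"
          using cisb measurable_cong_sets[of "uniform_measure lborel {0..2 * pi}" borel borel borel] by simp
      qed
      have cisl: "cis \<in> measurable lborel (restrict_space borel (sphere 0 1))"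
      proof (rule measurable_restrict_space2)
        show "cis \<in> space lborel \<rightarrow> sphere 0 1" using cisS by simp
        show "cis \<in> borel_measurable lborel" using cisb by simp
      qed
      define F where "F = (\<lambda>t. H (cis t))"
      have RI: "integral\<^sup>L circle_measure H = integral\<^sup>L (uniform_measure lborel {0..2*pi}) F"
        unfolding circle_measure_def F_def by (rule integral_distr[OF cism Hm])
      have Fm: "F \<in> borel_measurable lborel"
        unfolding F_def by (rule measurable_compose[OF cisl Hm])
      define f where "f = (\<lambda>t. cinner x (E (cis t)) * cinner (E (cis t)) y)"
      have Ff: "F t = cis t ^ n * f t" for t
      proof -
        have "F t = cnj (cinner (E (cis t)) w) * cinner (E (cis t)) y"
          by (simp add: F_def H_def g_def cinner_scaleC_left)
        also have "cnj (cinner (E (cis t)) w) = cinner w (E (cis t))"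
          using cinner_commute[of w "E (cis t)"] by simp
        also have "cinner w (E (cis t)) = cis t ^ n * cinner x (E (cis t))"
          unfolding w_def by (rule cadjoint_pow[OF assms(2)]) (use eig cisS in blast)
        finally show ?thesis by (simp add: f_def)
      qed
      define K where "K = B\<^sup>2 * norm x * norm y"
      have fb: "cmod (f t) \<le> K" for t
      proof -
        have a: "cmod (cinner x (E (cis t))) \<le> norm x * B"
          using cauchy_schwarz[of x "E (cis t)"] EBt[of t] by (meson mult_left_mono norm_ge_zero order_trans)
        have b: "cmod (cinner (E (cis t)) y) \<le> B * norm y"
          using cauchy_schwarz[of "E (cis t)" y] EBt[of t] by (meson mult_right_mono norm_ge_zero order_trans)
        have "cmod (f t) = cmod (cinner x (E (cis t))) * cmod (cinner (E (cis t)) y)"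
          by (simp add: f_def norm_mult)
        also have "\<dots> \<le> (norm x * B) * (B * norm y)"
          using a b B0 by (intro mult_mono) auto
        also have "\<dots> = K" by (simp add: K_def power2_eq_square ac_simps)
        finally show ?thesis .
      qed
      have Fb: "cmod (F t) \<le> K" for t
        using fb[of t] by (simp add: Ff norm_mult norm_power)
      define h where "h = pi / real n"
      have hpos: "0 < h" using n1 by (simp add: h_def)
      have hpi: "h \<le> pi" using n1 by (simp add: h_def divide_le_eq)
      have nh: "real n * h = pi" using n1 by (simp add: h_def)
      have fh: "cmod (f s - f t) \<le> 2 * B * CE * \<bar>s - t\<bar> powr \<alpha> * norm x * norm y"
        if st: "s \<in> {0..<2*pi}" "t \<in> {0..<2*pi}" for s t
      proof -
        define a where "a = E (cis s)"
        define b where "b = E (cis t)"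
        define q where "q = CE * \<bar>s - t\<bar> powr \<alpha>"
        have ab: "norm (a - b) \<le> q" using hol st by (simp add: a_def b_def q_def)
        have na: "norm a \<le> B" and nb: "norm b \<le> B" using EBt by (simp_all add: a_def b_def)
        have "f s - f t = cinner x (a - b) * cinner a y + cinner x b * cinner (a - b) y"
          by (simp add: f_def a_def b_def cinner_diff_left cinner_diff_right algebra_simps)
        hence "cmod (f s - f t) \<le> cmod (cinner x (a - b)) * cmod (cinner a y) + cmod (cinner x b) * cmod (cinner (a - b) y)"
          by (metis norm_mult norm_triangle_ineq)
        also have "\<dots> \<le> (norm x * q) * (B * norm y) + (norm x * B) * (q * norm y)"
        proof (intro add_mono mult_mono)
          show "cmod (cinner x (a - b)) \<le> norm x * q"
            using cauchy_schwarz[of x "a - b"] ab by (meson mult_left_mono norm_ge_zero order_trans)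
          show "cmod (cinner a y) \<le> B * norm y"
            using cauchy_schwarz[of a y] na by (meson mult_right_mono norm_ge_zero order_trans)
          show "cmod (cinner x b) \<le> norm x * B"
            using cauchy_schwarz[of x b] nb by (meson mult_left_mono norm_ge_zero order_trans)
          show "cmod (cinner (a - b) y) \<le> q * norm y"
            using cauchy_schwarz[of "a - b" y] ab by (meson mult_right_mono norm_ge_zero order_trans)
          show "0 \<le> norm x * q" using CE by (simp add: q_def)
          show "0 \<le> norm x * B" using B0 by simp
        qed simp_all
        also have "\<dots> = 2 * B * CE * \<bar>s - t\<bar> powr \<alpha> * norm x * norm y" by (simp add: q_def algebra_simps)
        finally show ?thesis .
      qed
      define D where "D = 2 * B * CE * h powr \<alpha> * norm x * norm y"
      have D0: "0 \<le> D" unfolding D_def using B0 CE by simp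
      have G: "cmod (F t + F (t + h)) \<le> D" if "0 \<le> t" "t + h < 2*pi" for t
      proof -
        have "cis (t + h) ^ n = cis t ^ n * cis (real n * h)"
          unfolding cis_mult[symmetric] power_mult_distrib Complex.DeMoivre[of h n] ..
        hence cth: "cis (t + h) ^ n = - (cis t ^ n)" by (simp add: nh)
        have "F t + F (t + h) = cis t ^ n * (f t - f (t + h))"
          unfolding Ff cth by (simp add: algebra_simps)
        hence "cmod (F t + F (t + h)) = cmod (f t - f (t + h))" by (simp add: norm_mult norm_power)
        also have "\<dots> \<le> 2 * B * CE * \<bar>t - (t + h)\<bar> powr \<alpha> * norm x * norm y"
          by (rule fh) (use that hpos in auto)
        also have "\<bar>t - (t + h)\<bar> = h" using hpos by simp
        finally show ?thesis by (simp add: D_def)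
      qed
      have Fsm: "(\<lambda>t. F (t + h)) \<in> borel_measurable lborel"
        using Fm by measurable
      have main: "cmod (integral {0..2*pi} F) \<le> h * K + pi * D"
      proof (rule shift_bound[where F=F and h=h and K=K and D=D])
        show "F integrable_on {a..b}" for a b by (rule bounded_integrable_on[OF Fm Fb])
        show "(\<lambda>t. F (t + h)) integrable_on {a..b}" for a b
          by (rule bounded_integrable_on[OF Fsm Fb])
        show "cmod (F t) \<le> K" for t by (rule Fb)
        show "cmod (F t + F (t + h)) \<le> D" if "0 \<le> t" "t + h < 2 * pi" for t using that by (rule G)
      qed (use hpos hpi D0 in auto)
      have "cinner (R_op E w) y = integral {0..2*pi} F / complex_of_real (2*pi)"
        unfolding RH RI by (rule uniform_integral[OF Fm Fb])
      hence "cmod (cinner (R_op E w) y) = cmod (integral {0..2*pi} F) / (2*pi)"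
        by (simp add: norm_divide)
      also have "\<dots> \<le> (h * K + pi * D) / (2*pi)" using main by (simp add: divide_right_mono)
      also have "\<dots> \<le> C * norm x * norm y / real n powr \<alpha>"
      proof -
        have nn: "real n powr \<alpha> \<le> real n" using powr_mono[of \<alpha> 1 "real n"] assms(5) n1 by simp
        have hK: "h * K / (2*pi) \<le> (B\<^sup>2 / 2) * norm x * norm y / real n powr \<alpha>"
        proof -
          have "h * K / (2*pi) = (B\<^sup>2 / 2) * norm x * norm y / real n"
            by (simp add: h_def K_def field_simps)
          also have "\<dots> \<le> (B\<^sup>2 / 2) * norm x * norm y / real n powr \<alpha>"
            using nn npos by (intro divide_left_mono) auto
          finally show ?thesis .
        qed
        have hD: "pi * D / (2*pi) = (B * CE * pi powr \<alpha>) * norm x * norm y / real n powr \<alpha>"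
        proof -
          have "h powr \<alpha> = pi powr \<alpha> / real n powr \<alpha>" unfolding h_def by (rule powr_divide)
          thus ?thesis by (simp add: D_def)
        qed
        have "(h * K + pi * D) / (2*pi) = h * K / (2*pi) + pi * D / (2*pi)" by (simp add: add_divide_distrib)
        also have "\<dots> \<le> (B\<^sup>2 / 2) * norm x * norm y / real n powr \<alpha> + (B * CE * pi powr \<alpha>) * norm x * norm y / real n powr \<alpha>"
          using hK hD by simp
        also have "\<dots> = (B\<^sup>2 / 2 + B * CE * pi powr \<alpha>) * norm x * norm y / real n powr \<alpha>"
          by (simp add: add_divide_distrib algebra_simps)
        also have "\<dots> \<le> C * norm x * norm y / real n powr \<alpha>"
          unfolding C_def using npos by (intro divide_right_mono mult_right_mono) auto
        finally show ?thesis .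
      qed
      finally show ?thesis unfolding w_def .
    qed
  qed
qed


end
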